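(* Let $\mathcal{T}$ be a finite or countably infinite set, let $\prec$ be a strict total order on $\mathcal{T}$, and let $\mathbf{p} \ne \mathbf{q}$ be two probability distributions on $\mathcal{T}$. For each positive integer $m$, let $X_0 \sim \mathbf{q}$, $X_1,\dots,X_m \sim^{\mathrm{iid}} \mathbf{p}$, $U_0,\dots,U_m \sim^{\mathrm{iid}} \mathrm{Uniform}(0,1)$ be mutually independent, and let $R_m = \sum_{j=1}^m \big(\mathbb{I}[X_j \prec X_0] + \mathbb{I}[X_j = X_0, U_j < U_0]\big)$. Let $M \ge 1$ be such that $R_M$ is not uniformly distributed on $\{0,1,\dots,M\}$. Then for all $m \ge M$, $R_m$ is not uniformly distributed on $\{0,1,\dots,m\}$.
   Context: $\mathbb{I}[\cdot]$ denotes the indicator of an event. (Such an $M$ exists whenever $\mathbf{p}\neq\mathbf{q}$.) *)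

theory Defs
  imports "HOL-Probability.Probability"
begin

definition unif01 :: "real measure" where
  "unif01 = uniform_measure lborel {0<..<1}"

text \<open>The sample space for R_m: first component is (X_0, U_0), second component
  is the family (X_j, U_j) for j = 1..m, all mutually independent.\<close>
definition rank_space :: "'a pmf \<Rightarrow> 'a pmf \<Rightarrow> nat \<Rightarrow> (('a \<times> real) \<times> (nat \<Rightarrow> 'a \<times> real)) measure" where
  "rank_space p q m =
     (measure_pmf q \<Otimes>\<^sub>M unif01) \<Otimes>\<^sub>M (PiM {1..m} (\<lambda>_. measure_pmf p \<Otimes>\<^sub>M unif01))"

text \<open>R_m = sum_{j=1}^m (I[X_j < X_0] + I[X_j = X_0, U_j < U_0]), with the strict order
  given by the relation r ((a,b) \<in> r means a precedes b).\<close>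
definition rank_stat :: "('a \<times> 'a) set \<Rightarrow> nat \<Rightarrow> ('a \<times> real) \<times> (nat \<Rightarrow> 'a \<times> real) \<Rightarrow> nat" where
  "rank_stat r m \<omega> =
     (\<Sum>j\<in>{1..m}. of_bool ((fst (snd \<omega> j), fst (fst \<omega>)) \<in> r)
                 + of_bool (fst (snd \<omega> j) = fst (fst \<omega>) \<and> snd (snd \<omega> j) < snd (fst \<omega>)))"

definition rank_law :: "('a \<times> 'a) set \<Rightarrow> 'a pmf \<Rightarrow> 'a pmf \<Rightarrow> nat \<Rightarrow> nat measure" where
  "rank_law r p q m = distr (rank_space p q m) (count_space UNIV) (rank_stat r m)"

definition rank_uniform :: "('a \<times> 'a) set \<Rightarrow> 'a pmf \<Rightarrow> 'a pmf \<Rightarrow> nat \<Rightarrow> bool" where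
  "rank_uniform r p q m \<longleftrightarrow> rank_law r p q m = measure_pmf (pmf_of_set {0..m})"

end

theory Submission imports Defs begin

lemma space_unif01[simp]: "space unif01 = UNIV"
  by (simp add: unif01_def)
lemma sets_unif01[simp, measurable_cong]: "sets unif01 = sets borel"
  by (simp add: unif01_def)
lemma prob_space_unif01: "prob_space unif01"
  unfolding unif01_def by (rule prob_space_uniform_measure) auto

lemma prob_space_N: "prob_space (measure_pmf p \<Otimes>\<^sub>M unif01)"
  by (intro prob_space_pair prob_space_unif01 prob_space_measure_pmf)

lemma space_N[simp]: "space (measure_pmf p \<Otimes>\<^sub>M unif01) = UNIV"
  by (simp add: space_pair_measure)

definition gg :: "('a::countable \<times> 'a) set \<Rightarrow> 'a \<times> real \<Rightarrow> 'a \<times> real \<Rightarrow> nat" where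
  "gg r w z = of_bool ((fst z, fst w) \<in> r) + of_bool (fst z = fst w \<and> snd z < snd w)"

definition WW :: "('a::countable \<times> 'a) set \<Rightarrow> 'a pmf \<Rightarrow> 'a \<times> real \<Rightarrow> real" where
  "WW r p w = measure (measure_pmf p \<Otimes>\<^sub>M unif01) {z. gg r w z = 1}"

lemma gg_01: "irrefl r \<Longrightarrow> gg r w z = 0 \<or> gg r w z = 1"
  by (auto simp: gg_def irrefl_def)

lemma pred_neq: "Measurable.pred M P \<Longrightarrow> Measurable.pred M Q \<Longrightarrow> Measurable.pred M (\<lambda>x. P x \<noteq> Q x)"
proof -
  assume [measurable]: "Measurable.pred M P" "Measurable.pred M Q"
  have "(\<lambda>x. P x \<noteq> Q x) = (\<lambda>x. (P x \<and> \<not> Q x) \<or> (\<not> P x \<and> Q x))" by auto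
  moreover have "Measurable.pred M (\<lambda>x. (P x \<and> \<not> Q x) \<or> (\<not> P x \<and> Q x))" by measurable
  ultimately show ?thesis by simp
qed

lemma gg_sets2: "{(w,z). gg r w z = 1} \<in> sets ((measure_pmf q \<Otimes>\<^sub>M unif01) \<Otimes>\<^sub>M (measure_pmf p \<Otimes>\<^sub>M unif01))"
proof -
  have P1[measurable]: "Measurable.pred ((measure_pmf q \<Otimes>\<^sub>M unif01) \<Otimes>\<^sub>M (measure_pmf p \<Otimes>\<^sub>M unif01)) (\<lambda>(w,z). (fst z, fst w) \<in> r)"
    by measurable
  have P2[measurable]: "Measurable.pred ((measure_pmf q \<Otimes>\<^sub>M unif01) \<Otimes>\<^sub>M (measure_pmf p \<Otimes>\<^sub>M unif01)) (\<lambda>(w,z). fst z = fst w \<and> snd z < snd w)"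
    by measurable
  have "Measurable.pred ((measure_pmf q \<Otimes>\<^sub>M unif01) \<Otimes>\<^sub>M (measure_pmf p \<Otimes>\<^sub>M unif01)) (\<lambda>x. (case x of (w,z) \<Rightarrow> (fst z, fst w) \<in> r) \<noteq> (case x of (w,z) \<Rightarrow> fst z = fst w \<and> snd z < snd w))"
    using P1 P2 by (rule pred_neq)
  moreover have "{(w,z). gg r w z = 1} = {x \<in> space ((measure_pmf q \<Otimes>\<^sub>M unif01) \<Otimes>\<^sub>M (measure_pmf p \<Otimes>\<^sub>M unif01)). (case x of (w,z) \<Rightarrow> (fst z, fst w) \<in> r) \<noteq> (case x of (w,z) \<Rightarrow> fst z = fst w \<and> snd z < snd w)}"
    by (auto simp: gg_def space_pair_measure)
  ultimately show ?thesis by (simp add: pred_def)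
qed

lemma gg_sets: "{z. gg r w z = 1} \<in> sets (measure_pmf p \<Otimes>\<^sub>M unif01)"
proof -
  have "Pair w -` {(w,z). gg r w z = 1} \<in> sets (measure_pmf p \<Otimes>\<^sub>M unif01)"
    by (rule sets_Pair1[OF gg_sets2[where q=p]])
  then show ?thesis by simp
qed

lemma WW_bounds: "0 \<le> WW r p w" "WW r p w \<le> 1"
  unfolding WW_def using prob_space.prob_le_1[OF prob_space_N] by auto

lemma slice:
  assumes irr: "irrefl r"
  shows "measure (PiM {1..m} (\<lambda>_. measure_pmf p \<Otimes>\<^sub>M unif01))
      {y \<in> space (PiM {1..m} (\<lambda>_. measure_pmf p \<Otimes>\<^sub>M unif01)). (\<Sum>j\<in>{1..m}. gg r w (y j)) = k}
    = real (m choose k) * WW r p w ^ k * (1 - WW r p w) ^ (m - k)"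
proof -
  define N where "N = measure_pmf p \<Otimes>\<^sub>M unif01"
  define A1 where "A1 = {z. gg r w z = 1}"
  define A0 where "A0 = UNIV - A1"
  define F where "F = (\<lambda>S. PiE {1..m} (\<lambda>j. if j \<in> S then A1 else A0))"
  define Sk where "Sk = {S. S \<subseteq> {1..m} \<and> card S = k}"
  interpret N: prob_space N unfolding N_def by (rule prob_space_N)
  interpret P: finite_product_prob_space "\<lambda>_. N" "{1..m}"
    by unfold_locales auto
  have A1s: "A1 \<in> sets N" unfolding A1_def N_def by (rule gg_sets)
  have A0s: "A0 \<in> sets N" unfolding A0_def using A1s sets.compl_sets[of A1 N] by (simp add: N_def)
  have mA0: "measure N A0 = 1 - WW r p w"
    unfolding A0_def using N.prob_compl[OF A1s] by (simp add: N_def WW_def A1_def)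
  have mA1: "measure N A1 = WW r p w" by (simp add: WW_def A1_def N_def)
  have sumcard: "(\<Sum>j\<in>{1..m}. gg r w (y j)) = card {j\<in>{1..m}. y j \<in> A1}" for y
  proof -
    have "(\<Sum>j\<in>{1..m}. gg r w (y j)) = (\<Sum>j\<in>{1..m}. of_bool (y j \<in> A1))"
      proof (rule sum.cong[OF refl])
      fix j show "gg r w (y j) = of_bool (y j \<in> A1)" using gg_01[OF irr, of w "y j"] by (auto simp: A1_def)
    qed
    also have "\<dots> = card {j\<in>{1..m}. y j \<in> A1}"
      by (simp add: Int_def)
    finally show ?thesis .
  qed
  have spc: "space (PiM {1..m} (\<lambda>_. N)) = PiE {1..m} (\<lambda>_. UNIV)"
    by (simp add: space_PiM N_def)
  have Eeq: "{y \<in> space (PiM {1..m} (\<lambda>_. N)). (\<Sum>j\<in>{1..m}. gg r w (y j)) = k} = (\<Union>S\<in>Sk. F S)"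
  proof (intro equalityI subsetI)
    fix y assume "y \<in> {y \<in> space (PiM {1..m} (\<lambda>_. N)). (\<Sum>j\<in>{1..m}. gg r w (y j)) = k}"
    then have y: "y \<in> space (PiM {1..m} (\<lambda>_. N))" and k: "(\<Sum>j\<in>{1..m}. gg r w (y j)) = k" by auto
    let ?S = "{j\<in>{1..m}. y j \<in> A1}"
    have "?S \<in> Sk" using k sumcard[of y] by (auto simp: Sk_def)
    moreover have "y \<in> F ?S" using y spc by (auto simp: F_def A0_def PiE_def)
    ultimately show "y \<in> (\<Union>S\<in>Sk. F S)" by blast
  next
    fix y assume "y \<in> (\<Union>S\<in>Sk. F S)"
    then obtain S where S: "S \<in> Sk" and y: "y \<in> F S" by blast
    have 1: "y \<in> space (PiM {1..m} (\<lambda>_. N))" using y spc by (auto simp: F_def PiE_def)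
    have yj: "y j \<in> (if j \<in> S then A1 else A0)" if "j \<in> {1..m}" for j using y that unfolding F_def by (rule PiE_mem)
    have "{j\<in>{1..m}. y j \<in> A1} = S"
    proof (intro equalityI subsetI)
      fix j assume "j \<in> {j\<in>{1..m}. y j \<in> A1}" then show "j \<in> S" using yj[of j] by (auto simp: A0_def split: if_splits)
    next
      fix j assume j: "j \<in> S" then have "j \<in> {1..m}" using S by (auto simp: Sk_def)
      then show "j \<in> {j\<in>{1..m}. y j \<in> A1}" using yj[of j] j by auto
    qed
    then have "(\<Sum>j\<in>{1..m}. gg r w (y j)) = k" using sumcard[of y] S by (simp add: Sk_def)
    with 1 show "y \<in> {y \<in> space (PiM {1..m} (\<lambda>_. N)). (\<Sum>j\<in>{1..m}. gg r w (y j)) = k}" by simp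
  qed
  have Fs: "F S \<in> sets (PiM {1..m} (\<lambda>_. N))" for S
    unfolding F_def using A1s A0s by (intro sets_PiM_I_finite) auto
  have disj: "disjoint_family_on F Sk"
  proof (unfold disjoint_family_on_def, intro ballI impI)
    fix S T assume S: "S \<in> Sk" and T: "T \<in> Sk" and ST: "S \<noteq> T"
    then obtain j where j: "j \<in> {1..m}" "(j \<in> S) \<noteq> (j \<in> T)" unfolding Sk_def by blast
    show "F S \<inter> F T = {}"
    proof (rule ccontr)
      assume "F S \<inter> F T \<noteq> {}"
      then obtain y where y1: "y \<in> F S" and y2: "y \<in> F T" by blast
      have "y j \<in> (if j \<in> S then A1 else A0)"
        using y1 j(1) unfolding F_def by (rule PiE_mem)
      moreover have "y j \<in> (if j \<in> T then A1 else A0)"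
        using y2 j(1) unfolding F_def by (rule PiE_mem)
      ultimately have "y j \<in> (if j \<in> S then A1 else A0)" "y j \<in> (if j \<in> T then A1 else A0)" by auto
      then show False using j(2) by (auto simp: A0_def split: if_splits)
    qed
  qed
  have mF: "measure (PiM {1..m} (\<lambda>_. N)) (F S) = WW r p w ^ k * (1 - WW r p w) ^ (m - k)" if S: "S \<in> Sk" for S
  proof -
    have "measure (PiM {1..m} (\<lambda>_. N)) (F S) = (\<Prod>j\<in>{1..m}. measure N (if j \<in> S then A1 else A0))"
      unfolding F_def using A1s A0s by (intro P.prob_times) auto
    also have "\<dots> = (\<Prod>j\<in>{1..m}. if j \<in> S then WW r p w else 1 - WW r p w)"
      by (rule prod.cong) (auto simp: mA0 mA1)
    also have "\<dots> = WW r p w ^ card ({1..m} \<inter> {j. j \<in> S}) * (1 - WW r p w) ^ card ({1..m} \<inter> - {j. j \<in> S})"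
      by (simp add: prod.If_cases)
    also have "card ({1..m} \<inter> {j. j \<in> S}) = k" using S by (auto simp: Sk_def Int_absorb1)
    also have "card ({1..m} \<inter> - {j. j \<in> S}) = m - k"
    proof -
      have "{1..m} \<inter> - {j. j \<in> S} = {1..m} - S" by auto
      moreover have "card ({1..m} - S) = m - k" using S unfolding Sk_def
        by (subst card_Diff_subset) (auto intro: finite_subset)
      ultimately show ?thesis by simp
    qed
    finally show ?thesis .
  qed
  have "measure (PiM {1..m} (\<lambda>_. N)) (\<Union>S\<in>Sk. F S) = (\<Sum>S\<in>Sk. measure (PiM {1..m} (\<lambda>_. N)) (F S))"
    using Fs disj by (intro P.finite_measure_finite_Union) (auto simp: Sk_def)
  also have "\<dots> = (\<Sum>S\<in>Sk. WW r p w ^ k * (1 - WW r p w) ^ (m - k))"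
    using mF by simp
  also have "\<dots> = real (m choose k) * (WW r p w ^ k * (1 - WW r p w) ^ (m - k))"
    using n_subsets[of "{1..m}" k] by (simp add: Sk_def)
  finally show ?thesis using Eeq by (simp add: N_def mult.assoc)
qed


lemma rank_stat_eq: "rank_stat r m \<omega> = (\<Sum>j\<in>{1..m}. gg r (fst \<omega>) (snd \<omega> j))"
  by (simp add: rank_stat_def gg_def)

lemma nat_meas_borel: "(f :: 'b \<Rightarrow> nat) \<in> borel_measurable M \<Longrightarrow> f \<in> measurable M (count_space UNIV)"
  using measurable_cong_sets[OF refl sets_borel_eq_count_space] by blast

lemma gg_meas_borel: "(\<lambda>x. gg r (fst x) (snd x)) \<in> borel_measurable ((measure_pmf q \<Otimes>\<^sub>M unif01) \<Otimes>\<^sub>M (measure_pmf p \<Otimes>\<^sub>M unif01))"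
  unfolding gg_def by measurable

lemma rank_meas: fixes r :: "('a::countable \<times> 'a) set" shows "rank_stat r m \<in> measurable (rank_space p q m) (count_space UNIV)"
proof -
  have "(\<lambda>\<omega>. gg r (fst \<omega>) (snd \<omega> j)) \<in> borel_measurable (rank_space p q m)" if j: "j \<in> {1..m}" for j
  proof -
    have "(\<lambda>\<omega>. (fst \<omega>, snd \<omega> j)) \<in> measurable (rank_space p q m) ((measure_pmf q \<Otimes>\<^sub>M unif01) \<Otimes>\<^sub>M (measure_pmf p \<Otimes>\<^sub>M unif01))"
      unfolding rank_space_def using j by measurable
    from measurable_compose[OF this gg_meas_borel[of r q p]] show ?thesis by simp
  qed
  then have "(\<lambda>\<omega>. (\<Sum>j\<in>{1..m}. gg r (fst \<omega>) (snd \<omega> j))) \<in> borel_measurable (rank_space p q m)"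
    by (rule borel_measurable_sum)
  then show ?thesis unfolding rank_stat_eq[abs_def] by (rule nat_meas_borel)
qed


lemma WW_meas: "WW r p \<in> borel_measurable (measure_pmf q \<Otimes>\<^sub>M unif01)"
proof -
  interpret N: prob_space "measure_pmf p \<Otimes>\<^sub>M unif01" by (rule prob_space_N)
  have "(\<lambda>w. emeasure (measure_pmf p \<Otimes>\<^sub>M unif01) (Pair w -` {(w,z). gg r w z = 1})) \<in> borel_measurable (measure_pmf q \<Otimes>\<^sub>M unif01)"
    by (rule N.measurable_emeasure_Pair[OF gg_sets2])
  then have "(\<lambda>w. enn2real (emeasure (measure_pmf p \<Otimes>\<^sub>M unif01) (Pair w -` {(w,z). gg r w z = 1}))) \<in> borel_measurable (measure_pmf q \<Otimes>\<^sub>M unif01)"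
    by measurable
  moreover have "(\<lambda>w. enn2real (emeasure (measure_pmf p \<Otimes>\<^sub>M unif01) (Pair w -` {(w,z). gg r w z = 1}))) = WW r p"
    by (auto simp: WW_def measure_def)
  ultimately show ?thesis by simp
qed

definition BB :: "('a::countable \<times> 'a) set \<Rightarrow> 'a pmf \<Rightarrow> nat \<Rightarrow> nat \<Rightarrow> 'a \<times> real \<Rightarrow> real" where
  "BB r p m k w = real (m choose k) * WW r p w ^ k * (1 - WW r p w) ^ (m - k)"

lemma BB_meas: "BB r p m k \<in> borel_measurable (measure_pmf q \<Otimes>\<^sub>M unif01)"
proof -
  note WW_meas[measurable]
  show ?thesis unfolding BB_def[abs_def] by measurable
qed

lemma BB_bounds: "0 \<le> BB r p m k w" "BB r p m k w \<le> real (m choose k)"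
proof -
  have a: "0 \<le> WW r p w ^ k" "WW r p w ^ k \<le> 1" using WW_bounds[of r p w] by (auto intro: power_le_one)
  have b: "0 \<le> (1 - WW r p w) ^ (m - k)" "(1 - WW r p w) ^ (m - k) \<le> 1" using WW_bounds[of r p w] by (auto intro: power_le_one)
  have "0 \<le> WW r p w ^ k * (1 - WW r p w) ^ (m - k)" "WW r p w ^ k * (1 - WW r p w) ^ (m - k) \<le> 1"
    using a b by (auto intro: mult_le_one)
  then show "0 \<le> BB r p m k w" "BB r p m k w \<le> real (m choose k)"
    unfolding BB_def by (auto simp: mult.assoc intro: mult_left_le)
qed

lemma BB_integrable: "integrable (measure_pmf q \<Otimes>\<^sub>M unif01) (BB r p m k)"
proof -
  interpret N0: prob_space "measure_pmf q \<Otimes>\<^sub>M unif01" by (rule prob_space_N)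
  show ?thesis
  proof (rule N0.integrable_const_bound[where B="real (m choose k)"])
    show "AE x in measure_pmf q \<Otimes>\<^sub>M unif01. norm (BB r p m k x) \<le> real (m choose k)"
      by (intro AE_I2) (simp add: abs_of_nonneg BB_bounds)
  qed (rule BB_meas)
qed

lemma Pform:
  fixes r :: "('a::countable \<times> 'a) set"
  assumes irr: "irrefl r"
  shows "measure (rank_space p q m) {\<omega>\<in>space (rank_space p q m). rank_stat r m \<omega> = k}
     = (\<integral>w. BB r p m k w \<partial>(measure_pmf q \<Otimes>\<^sub>M unif01))"
proof -
  define N where "N = measure_pmf p \<Otimes>\<^sub>M unif01"
  define N0 where "N0 = measure_pmf q \<Otimes>\<^sub>M unif01"
  define P where "P = PiM {1..m} (\<lambda>_. N)"
  define X where "X = {\<omega>\<in>space (rank_space p q m). rank_stat r m \<omega> = k}"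
  interpret N0: prob_space N0 unfolding N0_def by (rule prob_space_N)
  interpret P: prob_space P unfolding P_def N_def by (intro prob_space_PiM prob_space_N)
  have RS: "rank_space p q m = N0 \<Otimes>\<^sub>M P" by (simp add: rank_space_def N0_def P_def N_def)
  have Xs: "X \<in> sets (N0 \<Otimes>\<^sub>M P)"
  proof -
    have "rank_stat r m -` {k} \<inter> space (rank_space p q m) \<in> sets (rank_space p q m)"
      by (rule measurable_sets[OF rank_meas]) auto
    moreover have "rank_stat r m -` {k} \<inter> space (rank_space p q m) = X" by (auto simp: X_def)
    ultimately show ?thesis by (simp add: RS)
  qed
  have sl: "Pair w -` X = {y \<in> space P. (\<Sum>j\<in>{1..m}. gg r w (y j)) = k}" for w
    by (auto simp: X_def RS space_pair_measure N0_def rank_stat_eq)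
  have "emeasure (N0 \<Otimes>\<^sub>M P) X = (\<integral>\<^sup>+w. emeasure P (Pair w -` X) \<partial>N0)"
    by (rule P.emeasure_pair_measure_alt[OF Xs])
  also have "\<dots> = (\<integral>\<^sup>+w. ennreal (BB r p m k w) \<partial>N0)"
  proof (rule nn_integral_cong)
    fix w
    have "emeasure P (Pair w -` X) = ennreal (measure P (Pair w -` X))"
      by (simp add: P.emeasure_eq_measure)
    also have "measure P (Pair w -` X) = BB r p m k w"
      unfolding sl P_def N_def BB_def by (rule slice[OF irr])
    finally show "emeasure P (Pair w -` X) = ennreal (BB r p m k w)" .
  qed
  also have "\<dots> = ennreal (\<integral>w. BB r p m k w \<partial>N0)"
    by (rule nn_integral_eq_integral) (use BB_integrable BB_bounds in \<open>auto simp: N0_def intro!: AE_I2\<close>)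
  finally have "emeasure (rank_space p q m) X = ennreal (\<integral>w. BB r p m k w \<partial>N0)" by (simp add: RS)
  then have "measure (rank_space p q m) X = (\<integral>w. BB r p m k w \<partial>N0)"
  proof -
    have "0 \<le> (\<integral>w. BB r p m k w \<partial>N0)" by (intro integral_nonneg_AE AE_I2 BB_bounds)
    with \<open>emeasure (rank_space p q m) X = _\<close> show ?thesis by (simp add: measure_def)
  qed
  then show ?thesis by (simp add: X_def N0_def)
qed


lemma recur_pt:
  fixes x :: real
  assumes "k \<le> n"
  shows "real (Suc n) * (real (n choose k) * x ^ k * (1 - x) ^ (n - k))
    = real (Suc k) * (real (Suc n choose Suc k) * x ^ Suc k * (1 - x) ^ (Suc n - Suc k))
      + real (Suc n - k) * (real (Suc n choose k) * x ^ k * (1 - x) ^ (Suc n - k))"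
proof -
  have c1: "real (Suc k) * real (Suc n choose Suc k) = real (Suc n) * real (n choose k)"
    using Suc_times_binomial[of k n] by (metis of_nat_mult)
  have "(Suc n - k) * (Suc n choose k) = Suc n * (n choose k)"
    using binomial_absorb_comp[of "Suc n" k] by simp
  then have c2: "real (Suc n - k) * real (Suc n choose k) = real (Suc n) * real (n choose k)"
    by (metis of_nat_mult)
  have e: "Suc n - k = Suc (n - k)" using assms by simp
  have "real (Suc k) * (real (Suc n choose Suc k) * x ^ Suc k * (1 - x) ^ (Suc n - Suc k))
      + real (Suc n - k) * (real (Suc n choose k) * x ^ k * (1 - x) ^ (Suc n - k))
    = (real (Suc k) * real (Suc n choose Suc k)) * (x ^ Suc k * (1 - x) ^ (n - k))
      + (real (Suc n - k) * real (Suc n choose k)) * (x ^ k * (1 - x) ^ Suc (n - k))"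
    by (simp only: e diff_Suc_Suc)
  also have "\<dots> = real (Suc n) * real (n choose k) * (x ^ k * (1 - x) ^ (n - k)) * (x + (1 - x))"
    unfolding c1 c2 by (simp add: algebra_simps)
  finally show ?thesis by simp
qed

abbreviation PP where
  "PP r p q m k \<equiv> measure (rank_space p q m) {\<omega>\<in>space (rank_space p q m). rank_stat r m \<omega> = k}"

lemma recur:
  fixes r :: "('a::countable \<times> 'a) set"
  assumes irr: "irrefl r" and k: "k \<le> n"
  shows "real (Suc n) * PP r p q n k = real (Suc k) * PP r p q (Suc n) (Suc k) + real (Suc n - k) * PP r p q (Suc n) k"
proof -
  let ?N0 = "measure_pmf q \<Otimes>\<^sub>M unif01"
  have "real (Suc n) * PP r p q n k = (\<integral>w. real (Suc n) * BB r p n k w \<partial>?N0)"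
    by (simp add: Pform[OF irr])
  also have "\<dots> = (\<integral>w. real (Suc k) * BB r p (Suc n) (Suc k) w + real (Suc n - k) * BB r p (Suc n) k w \<partial>?N0)"
    unfolding BB_def using recur_pt[OF k] by simp
  also have "\<dots> = (\<integral>w. real (Suc k) * BB r p (Suc n) (Suc k) w \<partial>?N0) + (\<integral>w. real (Suc n - k) * BB r p (Suc n) k w \<partial>?N0)"
    by (intro Bochner_Integration.integral_add integrable_mult_right BB_integrable)
  also have "\<dots> = real (Suc k) * PP r p q (Suc n) (Suc k) + real (Suc n - k) * PP r p q (Suc n) k"
    by (simp add: Pform[OF irr])
  finally show ?thesis .
qed

lemma prob_space_rank: "prob_space (rank_space p q m)"
  unfolding rank_space_def by (intro prob_space_pair prob_space_N prob_space_PiM)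

lemma rank_le:
  fixes r :: "('a::countable \<times> 'a) set"
  assumes irr: "irrefl r"
  shows "rank_stat r m \<omega> \<le> m"
proof -
  have "rank_stat r m \<omega> \<le> (\<Sum>j\<in>{1..m}. 1)" unfolding rank_stat_eq
  proof (rule sum_mono)
    fix j show "gg r (fst \<omega>) (snd \<omega> j) \<le> 1" using gg_01[OF irr, of "fst \<omega>" "snd \<omega> j"] by auto
  qed
  then show ?thesis by simp
qed

lemma U1:
  fixes r :: "('a::countable \<times> 'a) set"
  assumes "rank_uniform r p q m" "k \<le> m"
  shows "PP r p q m k = 1 / real (Suc m)"
proof -
  have "measure (rank_law r p q m) {k} = measure (measure_pmf (pmf_of_set {0..m})) {k}"
    using assms(1) by (simp add: rank_uniform_def)
  also have "\<dots> = 1 / real (Suc m)" using assms(2) by (simp add: measure_pmf_single)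
  also have "measure (rank_law r p q m) {k} = measure (rank_space p q m) (rank_stat r m -` {k} \<inter> space (rank_space p q m))"
    unfolding rank_law_def by (rule measure_distr[OF rank_meas]) auto
  also have "rank_stat r m -` {k} \<inter> space (rank_space p q m) = {\<omega>\<in>space (rank_space p q m). rank_stat r m \<omega> = k}"
    by auto
  finally show ?thesis .
qed

lemma U2:
  fixes r :: "('a::countable \<times> 'a) set"
  assumes irr: "irrefl r" and h: "\<And>k. k \<le> m \<Longrightarrow> PP r p q m k = 1 / real (Suc m)"
  shows "rank_uniform r p q m"
  unfolding rank_uniform_def
proof (rule measure_eqI_countable[where A=UNIV])
  interpret R: prob_space "rank_space p q m" by (rule prob_space_rank)
  show "sets (rank_law r p q m) = Pow UNIV" by (simp add: rank_law_def)
  show "sets (measure_pmf (pmf_of_set {0..m})) = Pow UNIV" by simp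
  show "countable (UNIV :: nat set)" by simp
  fix a :: nat
  have "emeasure (rank_law r p q m) {a} = emeasure (rank_space p q m) (rank_stat r m -` {a} \<inter> space (rank_space p q m))"
    unfolding rank_law_def by (rule emeasure_distr[OF rank_meas]) auto
  also have "rank_stat r m -` {a} \<inter> space (rank_space p q m) = {\<omega>\<in>space (rank_space p q m). rank_stat r m \<omega> = a}"
    by auto
  also have "emeasure (rank_space p q m) \<dots> = ennreal (PP r p q m a)"
    by (simp add: R.emeasure_eq_measure)
  also have "PP r p q m a = (if a \<le> m then 1 / real (Suc m) else 0)"
  proof (cases "a \<le> m")
    case True then show ?thesis using h by simp
  next
    case False
    then have "{\<omega>\<in>space (rank_space p q m). rank_stat r m \<omega> = a} = {}"
      using rank_le[OF irr, of m] by force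
    then show ?thesis using False by (metis measure_empty)
  qed
  also have "ennreal \<dots> = emeasure (measure_pmf (pmf_of_set {0..m})) {a}"
    by (simp add: emeasure_pmf_single)
  finally show "emeasure (rank_law r p q m) {a} = emeasure (measure_pmf (pmf_of_set {0..m})) {a}" .
qed

lemma step:
  fixes r :: "('a::countable \<times> 'a) set"
  assumes irr: "irrefl r" and u: "rank_uniform r p q (Suc n)"
  shows "rank_uniform r p q n"
proof (rule U2[OF irr])
  fix k assume k: "k \<le> n"
  have "real (Suc n) * PP r p q n k = real (Suc k) * (1 / real (Suc (Suc n))) + real (Suc n - k) * (1 / real (Suc (Suc n)))"
    using recur[OF irr k, of p q] U1[OF u, of "Suc k"] U1[OF u, of k] k by simp
  also have "\<dots> = (real (Suc k) + real (Suc n - k)) / real (Suc (Suc n))" by (simp add: add_divide_distrib)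
  also have "real (Suc k) + real (Suc n - k) = real (Suc (Suc n))" using k by (simp add: of_nat_diff)
  also have "real (Suc (Suc n)) / real (Suc (Suc n)) = 1" by (simp del: of_nat_Suc)
  finally have h: "real (Suc n) * PP r p q n k = 1" .
  show "PP r p q n k = 1 / real (Suc n)" using h by (simp add: eq_divide_eq mult.commute del: of_nat_Suc)
qed

theorem theorem3p4:
  fixes r :: "('a::countable \<times> 'a) set" and p q :: "'a pmf" and M :: nat
  assumes "strict_linear_order r"
    and "p \<noteq> q"
    and "M \<ge> 1"
    and "\<not> rank_uniform r p q M"
  shows "\<forall>m\<ge>M. \<not> rank_uniform r p q m"
proof -
  have irr: "irrefl r" using assms(1) by (simp add: strict_linear_order_on_def)
  have "rank_uniform r p q (M + d) \<Longrightarrow> rank_uniform r p q M" for d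
    by (induction d) (auto dest: step[OF irr])
  then show ?thesis using assms(4) by (metis le_add_diff_inverse)
qed

end
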